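(* For every integer $n\ge 2$, the dihedral Artin group $DA_n=\langle a,b\mid [aba\cdots]_n=[bab\cdots]_n\rangle$ is Cayley systolic.
   Context: $[xyx\cdots]_k$ denotes the alternating word $xyx\cdots$ of length $k$. A group is Cayley systolic if it admits a systolic presentation, i.e. a presentation $\langle S\mid R\rangle$ with $S$ a finite generating set such that: $S\cap S^{-1}=\emptyset$; $R=\{a\cdot b\cdot c^{-1}\mid a,b,c\in S,\ abc^{-1}=e\}$ presents the group; there are no $a,b,c\in S$ with $abc=e$; $abc\in S\Rightarrow ab,bc\in S$; and $S$ satisfies: (1) if $ua=wb\in S$, $ud=wc\in S$, $u\neq w$, $a\neq d$ ($u,w,a,b,c,d\in S$), then $\exists k\in S$: $w=uk$ or $ua=udk$; (2) if $bv=cx\in S$, $av=dx\in S$, $v\neq x$, $a\neq b$, then $\exists k\in S$: $v=kx$ or $av=kbv$; (3) if $ux,uv\in S$, $vb=xc\in S$, $v\neq x$, then $\exists k\in S$: $k=uvb$ or $v=xk$; (4) if $vw,xw\in S$, $dx=av\in S$, $v\neq x$, then $\exists k\in S$: $k=avw$ or $x=kv$; (5) if $wv,wx,uv,ux\in S$, $v\neq x$, $u\neq w$, then $\exists k\in S$: $w=ku$ or $x=vk$. *)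

theory Defs
  imports "HOL-Algebra.Algebra"
begin

text \<open>Words in the free group on generators of type 'x: a letter (x, True) is x,
  a letter (x, False) is x^-1.\<close>
type_synonym 'x word = "('x \<times> bool) list"

definition eval_word :: "('g, 'm) monoid_scheme \<Rightarrow> ('x \<Rightarrow> 'g) \<Rightarrow> 'x word \<Rightarrow> 'g" where
  "eval_word G \<iota> w =
     foldr (\<lambda>(x, e) acc. (if e then \<iota> x else inv\<^bsub>G\<^esub> (\<iota> x)) \<otimes>\<^bsub>G\<^esub> acc) w \<one>\<^bsub>G\<^esub>"

definition inv_word :: "'x word \<Rightarrow> 'x word" where
  "inv_word w = rev (map (\<lambda>(x, e). (x, \<not> e)) w)"

inductive elem_step :: "'x set \<Rightarrow> 'x word set \<Rightarrow> 'x word \<Rightarrow> 'x word \<Rightarrow> bool"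
  for Gen :: "'x set" and R :: "'x word set" where
  free_del: "\<lbrakk> w1 \<in> lists (Gen \<times> UNIV); w2 \<in> lists (Gen \<times> UNIV); x \<in> Gen \<rbrakk>
     \<Longrightarrow> elem_step Gen R (w1 @ [(x, e), (x, \<not> e)] @ w2) (w1 @ w2)"
| free_ins: "\<lbrakk> w1 \<in> lists (Gen \<times> UNIV); w2 \<in> lists (Gen \<times> UNIV); x \<in> Gen \<rbrakk>
     \<Longrightarrow> elem_step Gen R (w1 @ w2) (w1 @ [(x, e), (x, \<not> e)] @ w2)"
| rel_del: "\<lbrakk> w1 \<in> lists (Gen \<times> UNIV); w2 \<in> lists (Gen \<times> UNIV); r \<in> R \<rbrakk>
     \<Longrightarrow> elem_step Gen R (w1 @ r @ w2) (w1 @ w2)"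
| rel_ins: "\<lbrakk> w1 \<in> lists (Gen \<times> UNIV); w2 \<in> lists (Gen \<times> UNIV); r \<in> R \<rbrakk>
     \<Longrightarrow> elem_step Gen R (w1 @ w2) (w1 @ r @ w2)"

definition pres_equiv :: "'x set \<Rightarrow> 'x word set \<Rightarrow> 'x word \<Rightarrow> 'x word \<Rightarrow> bool" where
  "pres_equiv Gen R = (elem_step Gen R)\<^sup>*\<^sup>*"

text \<open>The group G is presented by <Gen | R> via the generator map \<iota>: the images of Gen
  generate G, the relators hold in G, and every word trivial in G is a consequence
  of the relators (i.e. the kernel of F(Gen) -> G is the normal closure of R).\<close>
definition presents :: "('g, 'm) monoid_scheme \<Rightarrow> 'x set \<Rightarrow> ('x \<Rightarrow> 'g) \<Rightarrow> 'x word set \<Rightarrow> bool" where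
  "presents G Gen \<iota> R \<longleftrightarrow>
     \<iota> ` Gen \<subseteq> carrier G \<and>
     generate G (\<iota> ` Gen) = carrier G \<and>
     R \<subseteq> lists (Gen \<times> UNIV) \<and>
     (\<forall>r \<in> R. eval_word G \<iota> r = \<one>\<^bsub>G\<^esub>) \<and>
     (\<forall>w \<in> lists (Gen \<times> UNIV). eval_word G \<iota> w = \<one>\<^bsub>G\<^esub> \<longrightarrow> pres_equiv Gen R w [])"

definition tri_rels :: "('g, 'm) monoid_scheme \<Rightarrow> 'g set \<Rightarrow> 'g word set" where
  "tri_rels G S = {[(a, True), (b, True), (c, False)] | a b c.
      a \<in> S \<and> b \<in> S \<and> c \<in> S \<and> a \<otimes>\<^bsub>G\<^esub> b \<otimes>\<^bsub>G\<^esub> inv\<^bsub>G\<^esub> c = \<one>\<^bsub>G\<^esub>}"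

definition systolic_presentation :: "('g, 'm) monoid_scheme \<Rightarrow> 'g set \<Rightarrow> bool" where
  "systolic_presentation G S \<longleftrightarrow>
     S \<subseteq> carrier G \<and> finite S \<and>
     S \<inter> (\<lambda>s. inv\<^bsub>G\<^esub> s) ` S = {} \<and>
     presents G S id (tri_rels G S) \<and>
     (\<nexists>a b c. a \<in> S \<and> b \<in> S \<and> c \<in> S \<and> a \<otimes>\<^bsub>G\<^esub> b \<otimes>\<^bsub>G\<^esub> c = \<one>\<^bsub>G\<^esub>) \<and>
     (\<forall>a\<in>S. \<forall>b\<in>S. \<forall>c\<in>S. a \<otimes>\<^bsub>G\<^esub> b \<otimes>\<^bsub>G\<^esub> c \<in> S \<longrightarrow>
         a \<otimes>\<^bsub>G\<^esub> b \<in> S \<and> b \<otimes>\<^bsub>G\<^esub> c \<in> S) \<and>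
     \<comment> \<open>(1)\<close>
     (\<forall>u\<in>S. \<forall>w\<in>S. \<forall>a\<in>S. \<forall>b\<in>S. \<forall>c\<in>S. \<forall>d\<in>S.
        u \<otimes>\<^bsub>G\<^esub> a = w \<otimes>\<^bsub>G\<^esub> b \<and> u \<otimes>\<^bsub>G\<^esub> a \<in> S \<and>
        u \<otimes>\<^bsub>G\<^esub> d = w \<otimes>\<^bsub>G\<^esub> c \<and> u \<otimes>\<^bsub>G\<^esub> d \<in> S \<and> u \<noteq> w \<and> a \<noteq> d \<longrightarrow>
        (\<exists>k\<in>S. w = u \<otimes>\<^bsub>G\<^esub> k \<or> u \<otimes>\<^bsub>G\<^esub> a = u \<otimes>\<^bsub>G\<^esub> d \<otimes>\<^bsub>G\<^esub> k)) \<and>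
     \<comment> \<open>(2)\<close>
     (\<forall>a\<in>S. \<forall>b\<in>S. \<forall>c\<in>S. \<forall>d\<in>S. \<forall>v\<in>S. \<forall>x\<in>S.
        b \<otimes>\<^bsub>G\<^esub> v = c \<otimes>\<^bsub>G\<^esub> x \<and> b \<otimes>\<^bsub>G\<^esub> v \<in> S \<and>
        a \<otimes>\<^bsub>G\<^esub> v = d \<otimes>\<^bsub>G\<^esub> x \<and> a \<otimes>\<^bsub>G\<^esub> v \<in> S \<and> v \<noteq> x \<and> a \<noteq> b \<longrightarrow>
        (\<exists>k\<in>S. v = k \<otimes>\<^bsub>G\<^esub> x \<or> a \<otimes>\<^bsub>G\<^esub> v = k \<otimes>\<^bsub>G\<^esub> b \<otimes>\<^bsub>G\<^esub> v)) \<and>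
     \<comment> \<open>(3)\<close>
     (\<forall>u\<in>S. \<forall>v\<in>S. \<forall>x\<in>S. \<forall>b\<in>S. \<forall>c\<in>S.
        u \<otimes>\<^bsub>G\<^esub> x \<in> S \<and> u \<otimes>\<^bsub>G\<^esub> v \<in> S \<and>
        v \<otimes>\<^bsub>G\<^esub> b = x \<otimes>\<^bsub>G\<^esub> c \<and> v \<otimes>\<^bsub>G\<^esub> b \<in> S \<and> v \<noteq> x \<longrightarrow>
        (\<exists>k\<in>S. k = u \<otimes>\<^bsub>G\<^esub> v \<otimes>\<^bsub>G\<^esub> b \<or> v = x \<otimes>\<^bsub>G\<^esub> k)) \<and>
     \<comment> \<open>(4)\<close>
     (\<forall>v\<in>S. \<forall>w\<in>S. \<forall>x\<in>S. \<forall>a\<in>S. \<forall>d\<in>S.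
        v \<otimes>\<^bsub>G\<^esub> w \<in> S \<and> x \<otimes>\<^bsub>G\<^esub> w \<in> S \<and>
        d \<otimes>\<^bsub>G\<^esub> x = a \<otimes>\<^bsub>G\<^esub> v \<and> d \<otimes>\<^bsub>G\<^esub> x \<in> S \<and> v \<noteq> x \<longrightarrow>
        (\<exists>k\<in>S. k = a \<otimes>\<^bsub>G\<^esub> v \<otimes>\<^bsub>G\<^esub> w \<or> x = k \<otimes>\<^bsub>G\<^esub> v)) \<and>
     \<comment> \<open>(5)\<close>
     (\<forall>u\<in>S. \<forall>v\<in>S. \<forall>w\<in>S. \<forall>x\<in>S.
        w \<otimes>\<^bsub>G\<^esub> v \<in> S \<and> w \<otimes>\<^bsub>G\<^esub> x \<in> S \<and> u \<otimes>\<^bsub>G\<^esub> v \<in> S \<and> u \<otimes>\<^bsub>G\<^esub> x \<in> S \<and>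
        v \<noteq> x \<and> u \<noteq> w \<longrightarrow>
        (\<exists>k\<in>S. w = k \<otimes>\<^bsub>G\<^esub> u \<or> x = v \<otimes>\<^bsub>G\<^esub> k))"

definition Cayley_systolic :: "('g, 'm) monoid_scheme \<Rightarrow> bool" where
  "Cayley_systolic G \<longleftrightarrow> (\<exists>S. systolic_presentation G S)"

definition alt_word :: "'x \<Rightarrow> 'x \<Rightarrow> nat \<Rightarrow> 'x word" where
  "alt_word x y k = map (\<lambda>i. (if even i then x else y, True)) [0..<k]"

text \<open>The dihedral Artin relator [aba...]_n ([bab...]_n)^-1, with a = True, b = False.\<close>
definition dihedral_artin_relator :: "nat \<Rightarrow> bool word" where
  "dihedral_artin_relator n = alt_word True False n @ inv_word (alt_word False True n)"

end

theory Submission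
  imports Defs
begin


lemma eval_word_Nil[simp]: "eval_word G f [] = \<one>\<^bsub>G\<^esub>"
  by (simp add: eval_word_def)

lemma eval_word_Cons[simp]:
  "eval_word G f (p # w) = (if snd p then f (fst p) else inv\<^bsub>G\<^esub> (f (fst p))) \<otimes>\<^bsub>G\<^esub> eval_word G f w"
  by (cases p) (simp add: eval_word_def)

lemma inv_word_Nil[simp]: "inv_word [] = []"
  by (simp add: inv_word_def)

lemma inv_word_Cons[simp]: "inv_word (p # w) = inv_word w @ [(fst p, \<not> snd p)]"
  by (cases p) (simp add: inv_word_def)

lemma inv_word_append[simp]: "inv_word (u @ v) = inv_word v @ inv_word u"
  by (simp add: inv_word_def)

lemma inv_word_inv_word[simp]: "inv_word (inv_word w) = w"
  by (induction w) auto

lemma inv_word_lists[simp]: "(inv_word w \<in> lists (A \<times> UNIV)) = (w \<in> lists (A \<times> UNIV))"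
  by (induction w) auto

lemma (in group) eval_word_closed:
  "\<forall>p\<in>set w. f (fst p) \<in> carrier G \<Longrightarrow> eval_word G f w \<in> carrier G"
  by (induction w) auto

lemma (in group) eval_word_append:
  "\<forall>p\<in>set w1. f (fst p) \<in> carrier G \<Longrightarrow> \<forall>p\<in>set w2. f (fst p) \<in> carrier G \<Longrightarrow>
   eval_word G f (w1 @ w2) = eval_word G f w1 \<otimes> eval_word G f w2"
  by (induction w1) (auto simp: m_assoc eval_word_closed)

lemma (in group) eval_word_inv:
  "\<forall>p\<in>set w. f (fst p) \<in> carrier G \<Longrightarrow> eval_word G f (inv_word w) = inv (eval_word G f w)"
proof (induction w)
  case Nil then show ?case by simp
next
  case (Cons p w)
  have s: "\<forall>p\<in>set (inv_word w). f (fst p) \<in> carrier G"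
    using Cons.prems by (auto simp: inv_word_def split: prod.splits)
  have c: "eval_word G f w \<in> carrier G" using Cons.prems by (intro eval_word_closed) simp
  have fp: "f (fst p) \<in> carrier G" using Cons.prems by simp
  show ?case
    using Cons s c fp by (auto simp: eval_word_append inv_mult_group)
qed

definition sigma :: "'x word \<Rightarrow> int" where
  "sigma w = sum_list (map (\<lambda>p. if snd p then 1 else -1) w)"

lemma sigma_Nil[simp]: "sigma [] = 0" by (simp add: sigma_def)
lemma sigma_Cons[simp]: "sigma (p # w) = (if snd p then 1 else -1) + sigma w" by (simp add: sigma_def)
lemma sigma_append[simp]: "sigma (u @ v) = sigma u + sigma v" by (simp add: sigma_def)
lemma sigma_inv[simp]: "sigma (inv_word w) = - sigma w" by (induction w) auto

lemma alt_word_Suc: "alt_word x y (Suc k) = (x, True) # alt_word y x k"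
  unfolding alt_word_def by (simp add: upt_conv_Cons map_Suc_upt[symmetric] del: upt_Suc)

lemma alt_word_snoc: "alt_word x y (Suc k) = alt_word x y k @ [(if even k then x else y, True)]"
  unfolding alt_word_def by simp

lemma alt_word_0[simp]: "alt_word x y 0 = []" by (simp add: alt_word_def)

lemma sigma_alt[simp]: "sigma (alt_word x y k) = int k"
  by (induction k arbitrary: x y) (auto simp: alt_word_Suc)

lemma elem_step_sym: assumes "elem_step Gen R u v" shows "elem_step Gen R v u"
  using assms
proof cases
  case (free_del w1 w2 x e)
  then show ?thesis using elem_step.free_ins[of w1 Gen w2 x R e] by simp
next
  case (free_ins w1 w2 x e)
  then show ?thesis using elem_step.free_del[of w1 Gen w2 x R e] by simp
next
  case (rel_del w1 w2 r)
  then show ?thesis using elem_step.rel_ins[of w1 Gen w2 r R] by simp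
next
  case (rel_ins w1 w2 r)
  then show ?thesis using elem_step.rel_del[of w1 Gen w2 r R] by simp
qed

lemma pe_refl: "pres_equiv Gen R u u" by (simp add: pres_equiv_def)

lemma pe_trans: "pres_equiv Gen R u v \<Longrightarrow> pres_equiv Gen R v w \<Longrightarrow> pres_equiv Gen R u w"
  by (simp add: pres_equiv_def)

lemma pe_step: "elem_step Gen R u v \<Longrightarrow> pres_equiv Gen R u v"
  by (simp add: pres_equiv_def)

lemma pe_sym: "pres_equiv Gen R u v \<Longrightarrow> pres_equiv Gen R v u"
  unfolding pres_equiv_def
proof (induction rule: rtranclp.induct)
  case (rtrancl_refl a) then show ?case by simp
next
  case (rtrancl_into_rtrancl a b c)
  then show ?case by (meson converse_rtranclp_into_rtranclp elem_step_sym)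
qed

lemma elem_step_cong:
  assumes "elem_step Gen R u v" "p \<in> lists (Gen \<times> UNIV)" "q \<in> lists (Gen \<times> UNIV)"
  shows "elem_step Gen R (p @ u @ q) (p @ v @ q)"
  using assms(1)
proof cases
  case (free_del w1 w2 x e)
  then show ?thesis using elem_step.free_del[of "p @ w1" Gen "w2 @ q" x R e] assms by simp
next
  case (free_ins w1 w2 x e)
  then show ?thesis using elem_step.free_ins[of "p @ w1" Gen "w2 @ q" x R e] assms by simp
next
  case (rel_del w1 w2 r)
  then show ?thesis using elem_step.rel_del[of "p @ w1" Gen "w2 @ q" r R] assms by simp
next
  case (rel_ins w1 w2 r)
  then show ?thesis using elem_step.rel_ins[of "p @ w1" Gen "w2 @ q" r R] assms by simp
qed

lemma pe_cong:
  assumes "pres_equiv Gen R u v" "p \<in> lists (Gen \<times> UNIV)" "q \<in> lists (Gen \<times> UNIV)"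
  shows "pres_equiv Gen R (p @ u @ q) (p @ v @ q)"
  using assms(1) unfolding pres_equiv_def
proof (induction rule: rtranclp.induct)
  case (rtrancl_refl a) then show ?case by simp
next
  case (rtrancl_into_rtrancl a b c)
  then show ?case using elem_step_cong[OF _ assms(2,3)]
    by (meson rtranclp.rtrancl_into_rtrancl)
qed

lemma pe_cong_l: "pres_equiv Gen R u v \<Longrightarrow> p \<in> lists (Gen \<times> UNIV) \<Longrightarrow> pres_equiv Gen R (p @ u) (p @ v)"
  using pe_cong[of Gen R u v p "[]"] by simp

lemma pe_cong_r: "pres_equiv Gen R u v \<Longrightarrow> q \<in> lists (Gen \<times> UNIV) \<Longrightarrow> pres_equiv Gen R (u @ q) (v @ q)"
  using pe_cong[of Gen R u v "[]" q] by simp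

lemma pe_app: "pres_equiv Gen R u v \<Longrightarrow> pres_equiv Gen R u' v' \<Longrightarrow> v \<in> lists (Gen \<times> UNIV) \<Longrightarrow>
   u' \<in> lists (Gen \<times> UNIV) \<Longrightarrow> pres_equiv Gen R (u @ u') (v @ v')"
  using pe_cong_r[of Gen R u v u'] pe_cong_l[of Gen R u' v' v] pe_trans by blast

lemma pe_cancel: "w \<in> lists (Gen \<times> UNIV) \<Longrightarrow> pres_equiv Gen R (w @ inv_word w) []"
proof (induction w)
  case Nil then show ?case by (simp add: pe_refl)
next
  case (Cons p w)
  obtain x e where p: "p = (x, e)" by (cases p)
  have x: "x \<in> Gen" using Cons.prems p by auto
  have h1: "pres_equiv Gen R ([p] @ (w @ inv_word w) @ [(x, \<not> e)]) ([p] @ [] @ [(x, \<not> e)])"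
    using Cons x p by (intro pe_cong) auto
  have st: "elem_step Gen R ([] @ [(x, e), (x, \<not> e)] @ []) ([] @ [])"
    by (rule elem_step.free_del) (use x in auto)
  have e2: "[p] @ [] @ [(x, \<not> e)] = [] @ [(x, e), (x, \<not> e)] @ []" using p by simp
  have h2: "pres_equiv Gen R ([p] @ [] @ [(x, \<not> e)]) []"
    unfolding e2 using pe_step[OF st] by simp
  have eq: "(p # w) @ inv_word (p # w) = [p] @ (w @ inv_word w) @ [(x, \<not> e)]" using p by simp
  show ?case unfolding eq by (rule pe_trans[OF h1 h2])
qed

lemma pe_cancel': "w \<in> lists (Gen \<times> UNIV) \<Longrightarrow> pres_equiv Gen R (inv_word w @ w) []"
  using pe_cancel[of "inv_word w" Gen R] by simp

lemma pe_rel: "r \<in> R \<Longrightarrow> pres_equiv Gen R r []"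
  using elem_step.rel_del[of "[]" Gen "[]" r R] by (simp add: pe_step)

lemma pe_inv:
  assumes "pres_equiv Gen R u v" "u \<in> lists (Gen \<times> UNIV)" "v \<in> lists (Gen \<times> UNIV)"
  shows "pres_equiv Gen R (inv_word u) (inv_word v)"
proof -
  have c1: "pres_equiv Gen R (v @ inv_word v) []" using assms(3) by (rule pe_cancel)
  have "pres_equiv Gen R (inv_word u @ []) (inv_word u @ (v @ inv_word v))"
    using assms pe_cong_l[OF pe_sym[OF c1], of "inv_word u"] by simp
  moreover have "pres_equiv Gen R ((inv_word u @ v) @ inv_word v) ((inv_word u @ u) @ inv_word v)"
    using assms pe_cong_r[OF pe_cong_l[OF pe_sym[OF assms(1)], of "inv_word u"], of "inv_word v"] by simp
  moreover have "pres_equiv Gen R ((inv_word u @ u) @ inv_word v) ([] @ inv_word v)"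
    using assms pe_cong_r[OF pe_cancel'[OF assms(2)], of "inv_word v"] by simp
  ultimately show ?thesis by (metis append_assoc append_Nil append_Nil2 pe_trans)
qed

lemma elem_step_sigma:
  "elem_step Gen R u v \<Longrightarrow> \<forall>r\<in>R. sigma r = 0 \<Longrightarrow> sigma u = sigma v"
  by (cases rule: elem_step.cases) auto

lemma pe_sigma:
  "pres_equiv Gen R u v \<Longrightarrow> \<forall>r\<in>R. sigma r = 0 \<Longrightarrow> sigma u = sigma v"
  unfolding pres_equiv_def
  by (induction rule: rtranclp.induct) (auto dest: elem_step_sigma)



fun Aseq :: "('g, 'm) monoid_scheme \<Rightarrow> 'g \<Rightarrow> 'g \<Rightarrow> nat \<Rightarrow> 'g" where
  "Aseq G a b 0 = a"
| "Aseq G a b (Suc 0) = b"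
| "Aseq G a b (Suc (Suc k)) = inv\<^bsub>G\<^esub> (a \<otimes>\<^bsub>G\<^esub> b) \<otimes>\<^bsub>G\<^esub> Aseq G a b k \<otimes>\<^bsub>G\<^esub> (a \<otimes>\<^bsub>G\<^esub> b)"

lemma (in group) lcancel: "x \<otimes> y = x \<otimes> z \<Longrightarrow> x \<in> carrier G \<Longrightarrow> y \<in> carrier G \<Longrightarrow> z \<in> carrier G \<Longrightarrow> y = z"
  by (metis Units_eq Units_l_cancel)

lemma (in group) cancel_l1[simp]: "x \<in> carrier G \<Longrightarrow> y \<in> carrier G \<Longrightarrow> x \<otimes> (inv x \<otimes> y) = y"
  by (simp add: m_assoc[symmetric])

lemma (in group) cancel_l2[simp]: "x \<in> carrier G \<Longrightarrow> y \<in> carrier G \<Longrightarrow> inv x \<otimes> (x \<otimes> y) = y"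
  by (simp add: m_assoc[symmetric])

locale dart = group G for G :: "('g, 'm) monoid_scheme" (structure) +
  fixes n :: nat and a b xd :: 'g and S :: "'g set"
  assumes xd_def: "xd = a \<otimes> b"
    and S_def: "S = Aseq G a b ` {..<n} \<union> {xd}"
    and n2: "n \<ge> 2"
    and pres: "presents G UNIV (\<lambda>x. if x then a else b) {dihedral_artin_relator n}"
begin

abbreviation "\<iota> \<equiv> (\<lambda>y::bool. if y then a else b)"
abbreviation "A \<equiv> Aseq G a b"

lemma a_carr[simp]: "a \<in> carrier G" and b_carr[simp]: "b \<in> carrier G"
  using pres unfolding presents_def by auto

lemma iota_carr[simp]: "\<iota> y \<in> carrier G" by simp

lemma iota_ok[simp]: "\<forall>p\<in>set v. \<iota> (fst p) \<in> carrier G" by simp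

lemma xd_carr[simp]: "xd \<in> carrier G" by (simp add: xd_def)

lemma A_carr2: "A k \<in> carrier G \<and> A (Suc k) \<in> carrier G"
  by (induction k) auto

lemma A_carr[simp]: "A k \<in> carrier G"
  using A_carr2 by blast

lemma A_step: "A (Suc (Suc k)) = inv xd \<otimes> (A k \<otimes> xd)"
  by (simp add: m_assoc xd_def)

declare Aseq.simps(3)[simp del]

lemma A_tri: "A k \<otimes> A (Suc k) = xd"
proof (induction k rule: less_induct)
  case (less k)
  show ?case
  proof (cases k)
    case 0 then show ?thesis by (simp add: xd_def)
  next
    case (Suc k1)
    show ?thesis
    proof (cases k1)
      case 0
      have "A (Suc 0) \<otimes> A (Suc (Suc 0)) = b \<otimes> (inv b \<otimes> (inv a \<otimes> (a \<otimes> (a \<otimes> b))))"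
        by (simp only: A_step) (simp add: inv_mult_group m_assoc xd_def)
      also have "\<dots> = xd" by (simp add: xd_def)
      finally show ?thesis using Suc 0 by simp
    next
      case (Suc k2)
      have "A k \<otimes> A (Suc k) = inv xd \<otimes> (A k2 \<otimes> xd) \<otimes> (inv xd \<otimes> (A (Suc k2) \<otimes> xd))"
        using \<open>k = Suc k1\<close> Suc A_step by simp
      also have "\<dots> = inv xd \<otimes> ((A k2 \<otimes> A (Suc k2)) \<otimes> xd)"
        by (simp add: m_assoc)
      also have "\<dots> = xd" using less[of k2] \<open>k = Suc k1\<close> Suc by simp
      finally show ?thesis .
    qed
  qed
qed

lemma eval_app: "eval_word G \<iota> (v @ w) = eval_word G \<iota> v \<otimes> eval_word G \<iota> w"
  by (rule eval_word_append) auto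

lemma eval_inv: "eval_word G \<iota> (inv_word v) = inv (eval_word G \<iota> v)"
  by (rule eval_word_inv) auto

lemma eval_carr[simp]: "eval_word G \<iota> v \<in> carrier G"
  by (rule eval_word_closed) auto

lemma eval_rel: "eval_word G \<iota> (dihedral_artin_relator n) = \<one>"
  using pres unfolding presents_def by auto

lemma artin: "eval_word G \<iota> (alt_word True False n) = eval_word G \<iota> (alt_word False True n)"
proof -
  have "eval_word G \<iota> (alt_word True False n) \<otimes> inv (eval_word G \<iota> (alt_word False True n)) = \<one>"
    using eval_rel by (simp add: dihedral_artin_relator_def eval_app eval_inv)
  then show ?thesis
    by (metis eval_carr inv_closed inv_inv inv_equality r_inv right_cancel)
qed

lemma sig_eq:
  assumes "eval_word G \<iota> v1 = eval_word G \<iota> v2"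
  shows "sigma v1 = sigma v2"
proof -
  have "eval_word G \<iota> (v1 @ inv_word v2) = \<one>"
    using assms by (simp add: eval_app eval_inv)
  then have "pres_equiv UNIV {dihedral_artin_relator n} (v1 @ inv_word v2) []"
    using pres unfolding presents_def by auto
  moreover have h: "\<forall>r\<in>{dihedral_artin_relator n}. sigma r = 0"
    by (simp add: dihedral_artin_relator_def)
  ultimately have "sigma (v1 @ inv_word v2) = sigma ([] :: bool word)"
    by (rule pe_sigma)
  then show ?thesis by simp
qed

lemma eval_alt_Suc_T: "eval_word G \<iota> (alt_word True False (Suc k)) = a \<otimes> eval_word G \<iota> (alt_word False True k)"
  by (simp add: alt_word_Suc)

lemma eval_alt_Suc_F: "eval_word G \<iota> (alt_word False True (Suc k)) = b \<otimes> eval_word G \<iota> (alt_word True False k)"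
  by (simp add: alt_word_Suc)

lemma eval_alt_even: "eval_word G \<iota> (alt_word True False (2 * j)) = xd [^] j"
proof (induction j)
  case 0 then show ?case by simp
next
  case (Suc j)
  have "eval_word G \<iota> (alt_word True False (2 * Suc j)) = a \<otimes> (b \<otimes> xd [^] j)"
    using Suc by (simp add: alt_word_Suc)
  also have "\<dots> = xd [^] Suc j" by (subst nat_pow_Suc2) (simp_all add: m_assoc xd_def)
  finally show ?case .
qed

lemma eval_alt_odd: "eval_word G \<iota> (alt_word True False (Suc (2 * j))) = xd [^] j \<otimes> a"
  by (simp only: alt_word_snoc eval_app eval_alt_even) simp

lemma pw_step:
  assumes IH: "xd [^] j \<otimes> A k = c \<otimes> xd [^] j" and c: "c \<in> carrier G"
  shows "xd [^] Suc j \<otimes> A (Suc (Suc k)) = c \<otimes> xd [^] Suc j"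
proof -
  have "xd [^] Suc j \<otimes> A (Suc (Suc k)) = (xd [^] j \<otimes> xd) \<otimes> (inv xd \<otimes> (A k \<otimes> xd))"
    by (simp only: A_step nat_pow_Suc)
  also have "\<dots> = (xd [^] j \<otimes> A k) \<otimes> xd" by (simp add: m_assoc)
  also have "\<dots> = (c \<otimes> xd [^] j) \<otimes> xd" by (simp only: IH)
  also have "\<dots> = c \<otimes> xd [^] Suc j" using c by (simp add: m_assoc)
  finally show ?thesis .
qed

lemma pw_even: "xd [^] j \<otimes> A (2 * j) = a \<otimes> xd [^] j"
proof (induction j)
  case 0 then show ?case by simp
next
  case (Suc j)
  have e: "2 * Suc j = Suc (Suc (2 * j))" by simp
  show ?case unfolding e by (rule pw_step[OF Suc]) simp
qed

lemma pw_odd: "xd [^] j \<otimes> A (Suc (2 * j)) = b \<otimes> xd [^] j"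
proof (induction j)
  case 0 then show ?case by simp
next
  case (Suc j)
  have e: "Suc (2 * Suc j) = Suc (Suc (Suc (2 * j)))" by simp
  show ?case unfolding e by (rule pw_step[OF Suc]) simp
qed

lemma A_n: "A n = a"
proof (cases "even n")
  case True
  define m where "m = n div 2"
  have m: "n = 2 * m" using True unfolding m_def by simp
  have e1: "eval_word G \<iota> (alt_word True False n) = xd [^] m"
    unfolding m by (rule eval_alt_even)
  have e2: "eval_word G \<iota> (alt_word True False (Suc n)) = xd [^] m \<otimes> a"
    unfolding m by (rule eval_alt_odd)
  have e3: "eval_word G \<iota> (alt_word True False (Suc n)) = a \<otimes> eval_word G \<iota> (alt_word False True n)"
    by (rule eval_alt_Suc_T)
  have "xd [^] m \<otimes> A n = a \<otimes> xd [^] m" unfolding m by (rule pw_even)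
  also have "\<dots> = a \<otimes> eval_word G \<iota> (alt_word False True n)" by (simp only: e1[symmetric] artin)
  also have "\<dots> = xd [^] m \<otimes> a" by (simp only: e3[symmetric] e2)
  finally show ?thesis by (rule lcancel) auto
next
  case False
  define m where "m = n div 2"
  have m: "n = Suc (2 * m)" using False unfolding m_def by presburger
  have "xd [^] m \<otimes> A n = b \<otimes> xd [^] m" unfolding m by (rule pw_odd)
  also have "\<dots> = b \<otimes> eval_word G \<iota> (alt_word True False (2 * m))" by (simp only: eval_alt_even)
  also have "\<dots> = eval_word G \<iota> (alt_word False True n)" unfolding m by (simp only: eval_alt_Suc_F)
  also have "\<dots> = eval_word G \<iota> (alt_word True False n)" by (simp only: artin)
  also have "\<dots> = xd [^] m \<otimes> a" unfolding m by (rule eval_alt_odd)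
  finally show ?thesis by (rule lcancel) auto
qed

lemma A_Sn: "A (Suc n) = b"
proof -
  have "a \<otimes> A (Suc n) = a \<otimes> b" using A_tri[of n] A_n by (simp add: xd_def)
  then show ?thesis by (rule lcancel) auto
qed

lemma A_period: "A (k + n) = A k \<and> A (Suc k + n) = A (Suc k)"
proof (induction k)
  case 0 then show ?case using A_n A_Sn by simp
next
  case (Suc k)
  have e: "Suc (Suc k) + n = Suc (Suc (k + n))" by simp
  have "A (Suc (Suc k) + n) = A (Suc (Suc k))"
    unfolding e A_step using Suc by simp
  then show ?case using Suc by simp
qed

lemma A_in_S[simp]: "A k \<in> S"
proof (induction k rule: less_induct)
  case (less k)
  show ?case
  proof (cases "k < n")
    case True then show ?thesis by (simp add: S_def)
  next
    case False
    then have e: "k = (k - n) + n" by simp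
    have "A k = A ((k - n) + n)" by (simp only: e[symmetric])
    also have "\<dots> = A (k - n)" using A_period[of "k - n"] by (rule conjunct1)
    finally have "A k = A (k - n)" .
    moreover have "k - n < k" using False n2 by simp
    ultimately show ?thesis using less by simp
  qed
qed

lemma xd_in_S[simp]: "xd \<in> S" by (simp add: S_def)
lemma a_in_S[simp]: "a \<in> S" using A_in_S[of 0] by simp
lemma b_in_S[simp]: "b \<in> S" using A_in_S[of 1] by simp
lemma S_carr: "S \<subseteq> carrier G" by (auto simp: S_def)
lemma S_carr'[simp]: "s \<in> S \<Longrightarrow> s \<in> carrier G" using S_carr by auto
lemma S_finite: "finite S" by (simp add: S_def)

end


context dart
begin

lemma iota_S[simp]: "\<iota> y \<in> S" by (cases y) auto

definition psi :: "bool word \<Rightarrow> 'g word" where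
  "psi v = map (\<lambda>p. (\<iota> (fst p), snd p)) v"

lemma psi_Nil[simp]: "psi [] = []" by (simp add: psi_def)
lemma psi_append[simp]: "psi (u @ v) = psi u @ psi v" by (simp add: psi_def)
lemma psi_inv[simp]: "psi (inv_word v) = inv_word (psi v)"
  by (simp add: psi_def inv_word_def rev_map case_prod_beta)
lemma psi_alt: "psi (alt_word y z k) = alt_word (\<iota> y) (\<iota> z) k"
  by (simp add: psi_def alt_word_def)
lemma psi_lists[simp]: "psi v \<in> lists (S \<times> UNIV)"
  by (auto simp: psi_def)

lemma alt_lists[simp]: "y \<in> S \<Longrightarrow> z \<in> S \<Longrightarrow> alt_word y z k \<in> lists (S \<times> UNIV)"
  by (auto simp: alt_word_def)

lemma rep_lists[simp]: "replicate j (xd, True) \<in> lists (S \<times> UNIV)"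
  by auto

lemma tri:
  assumes "s \<in> S" "t \<in> S" "u \<in> S" "s \<otimes> t = u"
  shows "pres_equiv S (tri_rels G S) [(s, True), (t, True)] [(u, True)]"
proof -
  have "s \<otimes> t \<otimes> inv u = \<one>" using assms by simp
  then have r: "[(s, True), (t, True), (u, False)] \<in> tri_rels G S"
    unfolding tri_rels_def using assms by blast
  have st1: "elem_step S (tri_rels G S) ([(s, True), (t, True)] @ [])
      ([(s, True), (t, True)] @ [(u, False), (u, \<not> False)] @ [])"
    by (rule elem_step.free_ins) (use assms in auto)
  have st2: "elem_step S (tri_rels G S) ([] @ [(s, True), (t, True), (u, False)] @ [(u, True)])
      ([] @ [(u, True)])"
    by (rule elem_step.rel_del) (use assms r in auto)
  have p1: "pres_equiv S (tri_rels G S) [(s, True), (t, True)] [(s, True), (t, True), (u, False), (u, True)]"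
    using pe_step[OF st1] by simp
  have p2: "pres_equiv S (tri_rels G S) [(s, True), (t, True), (u, False), (u, True)] [(u, True)]"
    using pe_step[OF st2] by simp
  show ?thesis by (rule pe_trans[OF p1 p2])
qed

lemma triA: "pres_equiv S (tri_rels G S) [(A k, True), (A (Suc k), True)] [(xd, True)]"
  by (rule tri) (auto simp: A_tri)

lemma swapA: "pres_equiv S (tri_rels G S) [(A k, True), (xd, True)] [(xd, True), (A (Suc (Suc k)), True)]"
proof -
  have h1: "pres_equiv S (tri_rels G S) [(A k, True), (xd, True)]
     [(A k, True), (A (Suc k), True), (A (Suc (Suc k)), True)]"
    using pe_cong_l[OF pe_sym[OF triA[of "Suc k"]], of "[(A k, True)]"] by simp
  have h2: "pres_equiv S (tri_rels G S) [(A k, True), (A (Suc k), True), (A (Suc (Suc k)), True)]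
     [(xd, True), (A (Suc (Suc k)), True)]"
    using pe_cong_r[OF triA[of k], of "[(A (Suc (Suc k)), True)]"] by simp
  show ?thesis by (rule pe_trans[OF h1 h2])
qed

lemma shiftX: "pres_equiv S (tri_rels G S) ((A k, True) # replicate j (xd, True))
   (replicate j (xd, True) @ [(A (k + 2 * j), True)])"
proof (induction j arbitrary: k)
  case 0 then show ?case by (simp add: pe_refl)
next
  case (Suc j)
  have s1: "pres_equiv S (tri_rels G S) ((A k, True) # replicate (Suc j) (xd, True))
     ((xd, True) # (A (Suc (Suc k)), True) # replicate j (xd, True))"
    using pe_cong_r[OF swapA[of k], of "replicate j (xd, True)"] by simp
  have s2: "pres_equiv S (tri_rels G S) ((xd, True) # (A (Suc (Suc k)), True) # replicate j (xd, True))
     ((xd, True) # replicate j (xd, True) @ [(A (Suc (Suc k) + 2 * j), True)])"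
    using pe_cong_l[OF Suc[of "Suc (Suc k)"], of "[(xd, True)]"] by simp
  have e: "Suc (Suc k) + 2 * j = k + 2 * Suc j" by simp
  show ?case using pe_trans[OF s1 s2] unfolding e by simp
qed

lemma altE: "pres_equiv S (tri_rels G S) (alt_word a b (2 * j)) (replicate j (xd, True))"
proof (induction j)
  case 0 then show ?case by (simp add: pe_refl)
next
  case (Suc j)
  have e: "alt_word a b (2 * Suc j) = [(a, True), (b, True)] @ alt_word a b (2 * j)"
    by (simp add: alt_word_Suc)
  have s1: "pres_equiv S (tri_rels G S) ([(a, True), (b, True)] @ alt_word a b (2 * j))
     ([(xd, True)] @ alt_word a b (2 * j))"
    using pe_cong_r[OF triA[of 0], of "alt_word a b (2 * j)"] by simp
  have s2: "pres_equiv S (tri_rels G S) ([(xd, True)] @ alt_word a b (2 * j))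
     ([(xd, True)] @ replicate j (xd, True))"
    using pe_cong_l[OF Suc, of "[(xd, True)]"] by simp
  show ?case unfolding e using pe_trans[OF s1 s2] by simp
qed

lemma artinE: "pres_equiv S (tri_rels G S) (alt_word a b n) (alt_word b a n)"
proof (cases "even n")
  case True
  define m where "m = n div 2 - 1"
  have m: "n = Suc (Suc (2 * m))" using True n2 unfolding m_def by (auto elim!: evenE)
  have L: "pres_equiv S (tri_rels G S) (alt_word a b n) (replicate (Suc m) (xd, True))"
    using altE[of "Suc m"] m by simp
  have e: "alt_word b a n = [(A 1, True)] @ alt_word a b (2 * m) @ [(a, True)]"
    unfolding m alt_word_Suc[of b a "Suc (2 * m)"] alt_word_snoc[of a b "2 * m"] by simp
  have t1: "pres_equiv S (tri_rels G S) ([(A 1, True)] @ alt_word a b (2 * m) @ [(a, True)])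
     ([(A 1, True)] @ replicate m (xd, True) @ [(a, True)])"
    by (rule pe_cong[OF altE]) auto
  have t2: "pres_equiv S (tri_rels G S) (((A 1, True) # replicate m (xd, True)) @ [(a, True)])
     ((replicate m (xd, True) @ [(A (1 + 2 * m), True)]) @ [(a, True)])"
    by (rule pe_cong_r[OF shiftX]) auto
  have an: "A (Suc (Suc (2 * m))) = a" using A_n m by simp
  have t3: "pres_equiv S (tri_rels G S) (replicate m (xd, True) @ [(A (Suc (2 * m)), True), (A (Suc (Suc (2 * m))), True)])
     (replicate m (xd, True) @ [(xd, True)])"
    by (rule pe_cong_l[OF triA]) auto
  have R: "pres_equiv S (tri_rels G S) (alt_word b a n) (replicate (Suc m) (xd, True))"
    using pe_trans[OF pe_trans[OF t1[folded append.assoc, simplified] t2[simplified]] t3[unfolded an, simplified]] e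
    by (simp add: replicate_append_same)
  show ?thesis using pe_trans[OF L pe_sym[OF R]] .
next
  case False
  define m where "m = n div 2"
  have m: "n = Suc (2 * m)" using False unfolding m_def by presburger
  have e1: "alt_word a b n = alt_word a b (2 * m) @ [(a, True)]"
    unfolding m alt_word_snoc[of a b "2 * m"] by simp
  have L: "pres_equiv S (tri_rels G S) (alt_word a b n) (replicate m (xd, True) @ [(a, True)])"
    unfolding e1 by (rule pe_cong_r[OF altE]) auto
  have e2: "alt_word b a n = [(A 1, True)] @ alt_word a b (2 * m)"
    unfolding m by (simp add: alt_word_Suc)
  have r1: "pres_equiv S (tri_rels G S) ([(A 1, True)] @ alt_word a b (2 * m)) ((A 1, True) # replicate m (xd, True))"
    using pe_cong_l[OF altE, of "[(A 1, True)]"] by simp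
  have an: "A (1 + 2 * m) = a" using A_n m by simp
  have R: "pres_equiv S (tri_rels G S) (alt_word b a n) (replicate m (xd, True) @ [(a, True)])"
    unfolding e2 using pe_trans[OF r1 shiftX[of 1 m]] an by simp
  show ?thesis using pe_trans[OF L pe_sym[OF R]] .
qed

lemma relE: "pres_equiv S (tri_rels G S) (psi (dihedral_artin_relator n)) []"
proof -
  have e: "psi (dihedral_artin_relator n) = alt_word a b n @ inv_word (alt_word b a n)"
    by (simp add: dihedral_artin_relator_def psi_alt)
  have "pres_equiv S (tri_rels G S) (alt_word a b n @ inv_word (alt_word b a n))
      (alt_word b a n @ inv_word (alt_word b a n))"
    by (rule pe_cong_r[OF artinE]) simp
  moreover have "pres_equiv S (tri_rels G S) (alt_word b a n @ inv_word (alt_word b a n)) []"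
    by (rule pe_cancel) simp
  ultimately show ?thesis unfolding e by (rule pe_trans)
qed

end


context dart
begin

lemma psi_pair: "psi [(y, e), (y, \<not> e)] = [(\<iota> y, e), (\<iota> y, \<not> e)]"
  by (simp add: psi_def)

lemma trans_step:
  assumes "elem_step UNIV {dihedral_artin_relator n} v v'"
  shows "pres_equiv S (tri_rels G S) (psi v) (psi v')"
  using assms
proof cases
  case (free_del w1 w2 y e)
  have "elem_step S (tri_rels G S) (psi w1 @ [(\<iota> y, e), (\<iota> y, \<not> e)] @ psi w2) (psi w1 @ psi w2)"
    by (rule elem_step.free_del) auto
  then show ?thesis using free_del by (simp only: psi_append psi_pair pe_step)
next
  case (free_ins w1 w2 y e)
  have "elem_step S (tri_rels G S) (psi w1 @ psi w2) (psi w1 @ [(\<iota> y, e), (\<iota> y, \<not> e)] @ psi w2)"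
    by (rule elem_step.free_ins) auto
  then show ?thesis using free_ins by (simp only: psi_append psi_pair pe_step)
next
  case (rel_del w1 w2 r)
  have "pres_equiv S (tri_rels G S) (psi w1 @ psi r @ psi w2) (psi w1 @ [] @ psi w2)"
    using rel_del by (intro pe_cong) (auto simp: relE)
  then show ?thesis using rel_del by simp
next
  case (rel_ins w1 w2 r)
  have "pres_equiv S (tri_rels G S) (psi w1 @ psi r @ psi w2) (psi w1 @ [] @ psi w2)"
    using rel_ins by (intro pe_cong) (auto simp: relE)
  then show ?thesis using rel_ins by (simp add: pe_sym)
qed

lemma trans_pe:
  "pres_equiv UNIV {dihedral_artin_relator n} v v' \<Longrightarrow> pres_equiv S (tri_rels G S) (psi v) (psi v')"
  unfolding pres_equiv_def[of UNIV]
proof (induction rule: rtranclp.induct)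
  case (rtrancl_refl a) then show ?case by (simp add: pe_refl)
next
  case (rtrancl_into_rtrancl a b c)
  then show ?case using trans_step pe_trans by blast
qed

lemma rep_A: "\<exists>v. eval_word G \<iota> v = A k \<and> sigma v = 1 \<and> pres_equiv S (tri_rels G S) [(A k, True)] (psi v)"
proof (induction k rule: less_induct)
  case (less k)
  show ?case
  proof (cases k)
    case 0
    then show ?thesis by (intro exI[of _ "[(True, True)]"]) (simp add: psi_def pe_refl)
  next
    case (Suc k1)
    show ?thesis
    proof (cases k1)
      case 0
      then show ?thesis using Suc by (intro exI[of _ "[(False, True)]"]) (simp add: psi_def pe_refl)
    next
      case (Suc k2)
      then have k: "k = Suc (Suc k2)" using \<open>k = Suc k1\<close> by simp
      obtain v where v: "eval_word G \<iota> v = A k2" "sigma v = 1"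
        "pres_equiv S (tri_rels G S) [(A k2, True)] (psi v)"
        using less[of k2] k by auto
      define w :: "bool word" where "w = [(True, True), (False, True)]"
      have ew: "eval_word G \<iota> w = xd" by (simp add: w_def xd_def)
      have pw: "psi w = [(a, True), (b, True)]" by (simp add: w_def psi_def)
      have "eval_word G \<iota> (inv_word w @ v @ w) = inv xd \<otimes> (A k2 \<otimes> xd)"
        by (simp add: eval_app eval_inv ew v)
      also have "\<dots> = A k" using k A_step by simp
      finally have e: "eval_word G \<iota> (inv_word w @ v @ w) = A k" .
      have sg: "sigma (inv_word w @ v @ w) = 1" using v by (simp add: w_def)
      have tab: "pres_equiv S (tri_rels G S) [(xd, True)] [(a, True), (b, True)]"
        by (rule pe_sym, rule tri) (simp_all add: xd_def[symmetric])
      have c0: "pres_equiv S (tri_rels G S) [(xd, False), (A k2, True), (xd, True)]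
          [(xd, False), (xd, True), (A k, True)]"
        using pe_cong_l[OF swapA[of k2], of "[(xd, False)]"] k by simp
      have c0': "pres_equiv S (tri_rels G S) [(xd, False), (xd, True), (A k, True)] [(A k, True)]"
        using pe_cong_r[OF pe_cancel'[of "[(xd, True)]" S "tri_rels G S"], of "[(A k, True)]"] by simp
      have c1: "pres_equiv S (tri_rels G S) [(A k, True)] ([(xd, False)] @ [(A k2, True)] @ [(xd, True)])"
        using pe_sym[OF pe_trans[OF c0 c0']] by simp
      have ix: "pres_equiv S (tri_rels G S) [(xd, False)] (inv_word [(a, True), (b, True)])"
        using pe_inv[OF tab] by simp
      have c2: "pres_equiv S (tri_rels G S) ([(xd, False)] @ [(A k2, True)] @ [(xd, True)])
          (inv_word [(a, True), (b, True)] @ psi v @ [(a, True), (b, True)])"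
        by (rule pe_app[OF ix pe_app[OF v(3) tab]]) auto
      have "pres_equiv S (tri_rels G S) [(A k, True)] (psi (inv_word w @ v @ w))"
        using pe_trans[OF c1 c2] pw by simp
      then show ?thesis using e sg by blast
    qed
  qed
qed

lemma rep_S:
  assumes "s \<in> S"
  shows "\<exists>v. eval_word G \<iota> v = s \<and> pres_equiv S (tri_rels G S) [(s, True)] (psi v)
     \<and> (sigma v = 1 \<or> (sigma v = 2 \<and> s = xd))"
proof (cases "s = xd")
  case True
  have "pres_equiv S (tri_rels G S) [(xd, True)] [(a, True), (b, True)]"
    by (rule pe_sym, rule tri) (simp_all add: xd_def[symmetric])
  then show ?thesis using True
    by (intro exI[of _ "[(True, True), (False, True)]"]) (simp add: psi_def xd_def)
next
  case False
  then obtain k where "s = A k" using assms by (auto simp: S_def)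
  then show ?thesis using rep_A[of k] by blast
qed

lemma rep_word:
  "w \<in> lists (S \<times> UNIV) \<Longrightarrow> \<exists>v. eval_word G \<iota> v = eval_word G id w \<and> pres_equiv S (tri_rels G S) w (psi v)"
proof (induction w)
  case Nil then show ?case by (intro exI[of _ "[]"]) (simp add: pe_refl)
next
  case (Cons p w)
  obtain s e where p: "p = (s, e)" by (cases p)
  have s: "s \<in> S" and w: "w \<in> lists (S \<times> UNIV)" using Cons.prems p by auto
  obtain vw where vw: "eval_word G \<iota> vw = eval_word G id w" "pres_equiv S (tri_rels G S) w (psi vw)"
    using Cons.IH w by blast
  obtain vs where vs: "eval_word G \<iota> vs = s" "pres_equiv S (tri_rels G S) [(s, True)] (psi vs)"
    using rep_S[OF s] by blast
  show ?case
  proof (cases e)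
    case True
    have "pres_equiv S (tri_rels G S) ([(s, True)] @ w) (psi vs @ psi vw)"
      by (rule pe_app[OF vs(2) vw(2)]) (use w in auto)
    moreover have "eval_word G \<iota> (vs @ vw) = eval_word G id (p # w)"
      using True p vs vw by (simp add: eval_app id_def)
    ultimately show ?thesis using True p by (intro exI[of _ "vs @ vw"]) (simp add: id_def)
  next
    case False
    have i: "pres_equiv S (tri_rels G S) [(s, False)] (inv_word (psi vs))"
      using pe_inv[OF vs(2)] s by simp
    have "pres_equiv S (tri_rels G S) ([(s, False)] @ w) (inv_word (psi vs) @ psi vw)"
      by (rule pe_app[OF i vw(2)]) (use w in auto)
    moreover have "eval_word G \<iota> (inv_word vs @ vw) = eval_word G id (p # w)"
      using False p vs vw by (simp add: eval_app eval_inv id_def)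
    ultimately show ?thesis using False p by (intro exI[of _ "inv_word vs @ vw"]) (simp add: id_def)
  qed
qed

lemma presS: "presents G S id (tri_rels G S)"
  unfolding presents_def
proof (intro conjI ballI impI)
  show "id ` S \<subseteq> carrier G" using S_carr by simp
  show "generate G (id ` S) = carrier G"
  proof
    show "generate G (id ` S) \<subseteq> carrier G" using generate_incl[OF S_carr] by simp
    have "carrier G = generate G (\<iota> ` UNIV)" using pres unfolding presents_def by auto
    also have "\<dots> \<subseteq> generate G S" by (rule mono_generate) auto
    finally show "carrier G \<subseteq> generate G (id ` S)" by simp
  qed
  show "tri_rels G S \<subseteq> lists (S \<times> UNIV)" unfolding tri_rels_def by auto
  fix r assume "r \<in> tri_rels G S"
  then obtain s t u where r: "r = [(s, True), (t, True), (u, False)]" "s \<in> S" "t \<in> S" "u \<in> S"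
    "s \<otimes> t \<otimes> inv u = \<one>" unfolding tri_rels_def by blast
  then show "eval_word G id r = \<one>" by (simp add: m_assoc)
next
  fix w assume w: "w \<in> lists (S \<times> UNIV)" and e: "eval_word G id w = \<one>"
  obtain v where v: "eval_word G \<iota> v = eval_word G id w" "pres_equiv S (tri_rels G S) w (psi v)"
    using rep_word[OF w] by blast
  have "pres_equiv UNIV {dihedral_artin_relator n} v []"
    using pres v e unfolding presents_def by auto
  then have "pres_equiv S (tri_rels G S) (psi v) []" using trans_pe by fastforce
  then show "pres_equiv S (tri_rels G S) w []" using v(2) pe_trans by blast
qed

lemma sig_S: "s \<in> S \<Longrightarrow> eval_word G \<iota> v = s \<Longrightarrow> sigma v = 1 \<or> (sigma v = 2 \<and> s = xd)"
  using rep_S sig_eq by metis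

lemma repl: "s \<in> S \<Longrightarrow> \<exists>v. eval_word G \<iota> v = s \<and> sigma v \<ge> 1"
  using rep_S by fastforce

lemma prod2: assumes "s \<in> S" "t \<in> S" "s \<otimes> t \<in> S" shows "s \<otimes> t = xd"
proof -
  obtain vs vt where "eval_word G \<iota> vs = s" "sigma vs \<ge> 1" "eval_word G \<iota> vt = t" "sigma vt \<ge> 1"
    using repl assms by metis
  then have "eval_word G \<iota> (vs @ vt) = s \<otimes> t" "sigma (vs @ vt) \<ge> 2" by (auto simp: eval_app)
  then show ?thesis using sig_S[OF assms(3)] by fastforce
qed

lemma prod3: assumes "s \<in> S" "t \<in> S" "r \<in> S"
  shows "s \<otimes> t \<otimes> r \<notin> S" "s \<otimes> t \<otimes> r \<noteq> \<one>"
proof -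
  obtain vs vt vr where "eval_word G \<iota> vs = s" "sigma vs \<ge> 1" "eval_word G \<iota> vt = t" "sigma vt \<ge> 1"
     "eval_word G \<iota> vr = r" "sigma vr \<ge> 1"
    using repl assms by metis
  then have h: "eval_word G \<iota> (vs @ vt @ vr) = s \<otimes> t \<otimes> r" "sigma (vs @ vt @ vr) \<ge> 3"
    by (auto simp: eval_app m_assoc)
  show "s \<otimes> t \<otimes> r \<notin> S" using sig_S h by fastforce
  show "s \<otimes> t \<otimes> r \<noteq> \<one>"
  proof
    assume "s \<otimes> t \<otimes> r = \<one>"
    then have "eval_word G \<iota> (vs @ vt @ vr) = eval_word G \<iota> []" using h by simp
    then have "sigma (vs @ vt @ vr) = sigma ([] :: bool word)" by (rule sig_eq)
    then show False using h by simp
  qed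
qed

lemma invS: assumes "s \<in> S" shows "inv s \<notin> S"
proof
  assume "inv s \<in> S"
  obtain v where "eval_word G \<iota> v = s" "sigma v \<ge> 1" using repl assms by metis
  then have "eval_word G \<iota> (inv_word v) = inv s" "sigma (inv_word v) < 0" by (auto simp: eval_inv)
  then show False using sig_S[OF \<open>inv s \<in> S\<close>] by fastforce
qed

lemma systolic: "systolic_presentation G S"
  unfolding systolic_presentation_def
proof (intro conjI)
  show "S \<subseteq> carrier G" by (rule S_carr)
  show "finite S" by (rule S_finite)
  show "S \<inter> (\<lambda>s. inv s) ` S = {}" using invS by auto
  show "presents G S id (tri_rels G S)" by (rule presS)
  show "\<nexists>a b c. a \<in> S \<and> b \<in> S \<and> c \<in> S \<and> a \<otimes> b \<otimes> c = \<one>" using prod3(2) by blast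
  show "\<forall>a\<in>S. \<forall>b\<in>S. \<forall>c\<in>S. a \<otimes> b \<otimes> c \<in> S \<longrightarrow> a \<otimes> b \<in> S \<and> b \<otimes> c \<in> S"
    using prod3(1) by blast
  show "\<forall>u\<in>S. \<forall>w\<in>S. \<forall>a\<in>S. \<forall>b\<in>S. \<forall>c\<in>S. \<forall>d\<in>S.
        u \<otimes> a = w \<otimes> b \<and> u \<otimes> a \<in> S \<and>
        u \<otimes> d = w \<otimes> c \<and> u \<otimes> d \<in> S \<and> u \<noteq> w \<and> a \<noteq> d \<longrightarrow>
        (\<exists>k\<in>S. w = u \<otimes> k \<or> u \<otimes> a = u \<otimes> d \<otimes> k)"
  proof (intro ballI impI)
    fix u w a' b' c d assume m: "u \<in> S" "w \<in> S" "a' \<in> S" "b' \<in> S" "c \<in> S" "d \<in> S"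
      and h: "u \<otimes> a' = w \<otimes> b' \<and> u \<otimes> a' \<in> S \<and> u \<otimes> d = w \<otimes> c \<and> u \<otimes> d \<in> S \<and> u \<noteq> w \<and> a' \<noteq> d"
    have "u \<otimes> a' = xd" by (rule prod2) (use m h in auto)
    moreover have "u \<otimes> d = xd" by (rule prod2) (use m h in auto)
    ultimately have "u \<otimes> a' = u \<otimes> d" by simp
    then have "a' = d" by (rule lcancel) (use m in auto)
    then show "\<exists>k\<in>S. w = u \<otimes> k \<or> u \<otimes> a' = u \<otimes> d \<otimes> k" using h by simp
  qed
  show "\<forall>a\<in>S. \<forall>b\<in>S. \<forall>c\<in>S. \<forall>d\<in>S. \<forall>v\<in>S. \<forall>x\<in>S.
        b \<otimes> v = c \<otimes> x \<and> b \<otimes> v \<in> S \<and>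
        a \<otimes> v = d \<otimes> x \<and> a \<otimes> v \<in> S \<and> v \<noteq> x \<and> a \<noteq> b \<longrightarrow>
        (\<exists>k\<in>S. v = k \<otimes> x \<or> a \<otimes> v = k \<otimes> b \<otimes> v)"
  proof (intro ballI impI)
    fix a' b' c d v x assume m: "a' \<in> S" "b' \<in> S" "c \<in> S" "d \<in> S" "v \<in> S" "x \<in> S"
      and h: "b' \<otimes> v = c \<otimes> x \<and> b' \<otimes> v \<in> S \<and> a' \<otimes> v = d \<otimes> x \<and> a' \<otimes> v \<in> S \<and> v \<noteq> x \<and> a' \<noteq> b'"
    have "a' \<otimes> v = xd" by (rule prod2) (use m h in auto)
    moreover have "b' \<otimes> v = xd" by (rule prod2) (use m h in auto)
    ultimately have "a' \<otimes> v = b' \<otimes> v" by simp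
    then have "a' = b'" using m by simp
    then show "\<exists>k\<in>S. v = k \<otimes> x \<or> a' \<otimes> v = k \<otimes> b' \<otimes> v" using h by simp
  qed
  show "\<forall>u\<in>S. \<forall>v\<in>S. \<forall>x\<in>S. \<forall>b\<in>S. \<forall>c\<in>S.
        u \<otimes> x \<in> S \<and> u \<otimes> v \<in> S \<and>
        v \<otimes> b = x \<otimes> c \<and> v \<otimes> b \<in> S \<and> v \<noteq> x \<longrightarrow>
        (\<exists>k\<in>S. k = u \<otimes> v \<otimes> b \<or> v = x \<otimes> k)"
  proof (intro ballI impI)
    fix u v x b' c assume m: "u \<in> S" "v \<in> S" "x \<in> S" "b' \<in> S" "c \<in> S"
      and h: "u \<otimes> x \<in> S \<and> u \<otimes> v \<in> S \<and> v \<otimes> b' = x \<otimes> c \<and> v \<otimes> b' \<in> S \<and> v \<noteq> x"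
    have "u \<otimes> x = xd" by (rule prod2) (use m h in auto)
    moreover have "u \<otimes> v = xd" by (rule prod2) (use m h in auto)
    ultimately have "u \<otimes> x = u \<otimes> v" by simp
    then have "x = v" by (rule lcancel) (use m in auto)
    then show "\<exists>k\<in>S. k = u \<otimes> v \<otimes> b' \<or> v = x \<otimes> k" using h by simp
  qed
  show "\<forall>v\<in>S. \<forall>w\<in>S. \<forall>x\<in>S. \<forall>a\<in>S. \<forall>d\<in>S.
        v \<otimes> w \<in> S \<and> x \<otimes> w \<in> S \<and>
        d \<otimes> x = a \<otimes> v \<and> d \<otimes> x \<in> S \<and> v \<noteq> x \<longrightarrow>
        (\<exists>k\<in>S. k = a \<otimes> v \<otimes> w \<or> x = k \<otimes> v)"
  proof (intro ballI impI)
    fix v w x a' d assume m: "v \<in> S" "w \<in> S" "x \<in> S" "a' \<in> S" "d \<in> S"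
      and h: "v \<otimes> w \<in> S \<and> x \<otimes> w \<in> S \<and> d \<otimes> x = a' \<otimes> v \<and> d \<otimes> x \<in> S \<and> v \<noteq> x"
    have "v \<otimes> w = xd" by (rule prod2) (use m h in auto)
    moreover have "x \<otimes> w = xd" by (rule prod2) (use m h in auto)
    ultimately have "v \<otimes> w = x \<otimes> w" by simp
    then have "v = x" using m by simp
    then show "\<exists>k\<in>S. k = a' \<otimes> v \<otimes> w \<or> x = k \<otimes> v" using h by simp
  qed
  show "\<forall>u\<in>S. \<forall>v\<in>S. \<forall>w\<in>S. \<forall>x\<in>S.
        w \<otimes> v \<in> S \<and> w \<otimes> x \<in> S \<and> u \<otimes> v \<in> S \<and> u \<otimes> x \<in> S \<and>
        v \<noteq> x \<and> u \<noteq> w \<longrightarrow>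
        (\<exists>k\<in>S. w = k \<otimes> u \<or> x = v \<otimes> k)"
  proof (intro ballI impI)
    fix u v w x assume m: "u \<in> S" "v \<in> S" "w \<in> S" "x \<in> S"
      and h: "w \<otimes> v \<in> S \<and> w \<otimes> x \<in> S \<and> u \<otimes> v \<in> S \<and> u \<otimes> x \<in> S \<and> v \<noteq> x \<and> u \<noteq> w"
    have "w \<otimes> v = xd" by (rule prod2) (use m h in auto)
    moreover have "w \<otimes> x = xd" by (rule prod2) (use m h in auto)
    ultimately have "w \<otimes> v = w \<otimes> x" by simp
    then have "v = x" by (rule lcancel) (use m in auto)
    then show "\<exists>k\<in>S. w = k \<otimes> u \<or> x = v \<otimes> k" using h by simp
  qed
qed

end

theorem mainTheorem12:
  fixes G :: "('g, 'm) monoid_scheme" and n :: nat and a b :: 'g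
  assumes "group G" and "n \<ge> 2"
    and "presents G UNIV (\<lambda>x. if x then a else b) {dihedral_artin_relator n}"
  shows "Cayley_systolic G"
proof -
  have "dart G n a b (a \<otimes>\<^bsub>G\<^esub> b) (Aseq G a b ` {..<n} \<union> {a \<otimes>\<^bsub>G\<^esub> b})"
    unfolding dart_def dart_axioms_def using assms by auto
  then have "systolic_presentation G (Aseq G a b ` {..<n} \<union> {a \<otimes>\<^bsub>G\<^esub> b})"
    by (rule dart.systolic)
  then show ?thesis unfolding Cayley_systolic_def by blast
qed


end
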